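(* Let $m\in(0,1]$ and assume $\alpha>\frac{1}{Kh}$, $\theta>\theta_2$ and $c_2<c<c_1$. Then $G>0$, $H>0$, and the interior fixed point $E^*=(x^*,y^* )$ of the discrete map (DFP) is stable (both Jacobian eigenvalues have modulus $<1$) whenever $s<\min\{s_4,s_5\}$, where $$s_4=\Bigl(\frac{m\Gamma(m)G}{H}\Bigr)^{1/m},\qquad s_5=\Bigl(\frac{2m\Gamma(m)}{G}\Bigr)^{1/m}.$$
   Context: Fix parameters $r,K,\alpha,h,d>0$, $0<\theta<1$, $0<c<1$, a fractional order $m\in(0,1]$ and a step size $s>0$; put $S=\frac{s^m}{m\Gamma(m)}$. The discretized fractional-order system (DFP) is the map $$x_{n+1}=x_n+S\,x_n\Bigl(r\bigl(1-\tfrac{x_n}{K}\bigr)-\frac{\alpha(1-c)y_n}{1+\alpha(1-c)hx_n}\Bigr),\qquad y_{n+1}=y_n+S\,y_n\Bigl(\frac{\theta\alpha(1-c)x_n}{1+\alpha(1-c)hx_n}-d\Bigr).$$ Its interior fixed point is $E^*=(x^*,y^* )$ with $x^*=\frac{d}{\alpha(1-c)(\theta-hd)}$, $y^*=\frac{r(K-x^* )\{1+\alpha h(1-c)x^*\}}{\alpha K(1-c)}$. Define $G=\frac{rx^*}{K\theta}\bigl[\theta+hd-\alpha hK(1-c)(\theta-hd)\bigr]$, $H=\frac{rx^*(\theta-hd)}{K\theta}\bigl[\alpha K(1-c)(\theta-hd)-d\bigr]$. Thresholds: $c_1=1-\frac{d}{\alpha K(\theta-hd)}$, $c_2=1-\frac{\theta+hd}{\alpha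 Kh(\theta-hd)}$, $\theta_2=\frac{hd(\alpha Kh+1)}{\alpha Kh-1}$. *)

theory Defs
  imports "HOL-Analysis.Analysis"
begin

definition Sfac :: "real \<Rightarrow> real \<Rightarrow> real" where
  "Sfac m s = s powr m / (m * Gamma m)"

definition DFP :: "real \<Rightarrow> real \<Rightarrow> real \<Rightarrow> real \<Rightarrow> real \<Rightarrow> real \<Rightarrow> real \<Rightarrow> real \<Rightarrow> real
                    \<Rightarrow> real^2 \<Rightarrow> real^2" where
  "DFP r K \<alpha> h d \<theta> c m s p =
    (let x = p$1; y = p$2; S = Sfac m s in
     vector [x + S * x * (r * (1 - x / K) - \<alpha> * (1 - c) * y / (1 + \<alpha> * (1 - c) * h * x)),
             y + S * y * (\<theta> * \<alpha> * (1 - c) * x / (1 + \<alpha> * (1 - c) * h * x) - d)])"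

definition xstar :: "real \<Rightarrow> real \<Rightarrow> real \<Rightarrow> real \<Rightarrow> real \<Rightarrow> real" where
  "xstar \<alpha> h d \<theta> c = d / (\<alpha> * (1 - c) * (\<theta> - h * d))"

definition ystar :: "real \<Rightarrow> real \<Rightarrow> real \<Rightarrow> real \<Rightarrow> real \<Rightarrow> real \<Rightarrow> real \<Rightarrow> real" where
  "ystar r K \<alpha> h d \<theta> c = (let x = xstar \<alpha> h d \<theta> c in
      r * (K - x) * (1 + \<alpha> * h * (1 - c) * x) / (\<alpha> * K * (1 - c)))"

definition Gval :: "real \<Rightarrow> real \<Rightarrow> real \<Rightarrow> real \<Rightarrow> real \<Rightarrow> real \<Rightarrow> real \<Rightarrow> real" where
  "Gval r K \<alpha> h d \<theta> c = r * xstar \<alpha> h d \<theta> c / (K * \<theta>) *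
      (\<theta> + h * d - \<alpha> * h * K * (1 - c) * (\<theta> - h * d))"

definition Hval :: "real \<Rightarrow> real \<Rightarrow> real \<Rightarrow> real \<Rightarrow> real \<Rightarrow> real \<Rightarrow> real \<Rightarrow> real" where
  "Hval r K \<alpha> h d \<theta> c = r * xstar \<alpha> h d \<theta> c * (\<theta> - h * d) / (K * \<theta>) *
      (\<alpha> * K * (1 - c) * (\<theta> - h * d) - d)"

definition cplx_eigenvalue :: "real^2^2 \<Rightarrow> complex \<Rightarrow> bool" where
  "cplx_eigenvalue A z \<longleftrightarrow>
     (\<exists>v::complex^2. v \<noteq> 0 \<and> (\<chi> i. \<Sum>j\<in>UNIV. complex_of_real (A$i$j) * v$j) = z *s v)"

end

theory Submission
  imports Defs
begin

lemma vnth_deriv: "((\<lambda>p::real^2. p$i) has_derivative (\<lambda>v. v$i)) F"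
  by (rule bounded_linear_imp_has_derivative[OF bounded_linear_vec_nth])

lemma quad_root_lt1:
  fixes T D :: real and z :: complex
  assumes "z^2 - T*z + D = 0" "D < 1" "1 - T + D > 0" "1 + T + D > 0"
  shows "cmod z < 1"
proof -
  obtain a b where z: "z = Complex a b" by (cases z)
  have e1: "a^2 - b^2 - T*a + D = 0" and e2: "2*a*b - T*b = 0"
    using assms(1) unfolding z by (auto simp: complex_eq_iff power2_eq_square)
  show ?thesis
  proof (cases "b = 0")
    case True
    hence ea: "a*a - T*a + D = 0" using e1 by (simp add: power2_eq_square)
    define a' where "a' = T - a"
    have p: "a * a' = D" using ea unfolding a'_def by (simp add: algebra_simps)
    have p1: "(1 - a)*(1 - a') > 0" using assms(3) p unfolding a'_def by (simp add: algebra_simps)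
    have p2: "(1 + a)*(1 + a') > 0" using assms(4) p unfolding a'_def by (simp add: algebra_simps)
    have "\<bar>a\<bar> < 1"
    proof (rule ccontr)
      assume "\<not> \<bar>a\<bar> < 1"
      hence "a \<ge> 1 \<or> a \<le> -1" by auto
      thus False
      proof
        assume "a \<ge> 1"
        hence "a > 1" using p1 by (cases "a = 1") auto
        hence "a' > 1" using p1 by (auto simp: zero_less_mult_iff)
        hence "a * a' > 1 * 1" using \<open>a > 1\<close> by (intro mult_strict_mono) auto
        thus False using p assms(2) by simp
      next
        assume "a \<le> -1"
        hence "a < -1" using p2 by (cases "a = -1") auto
        hence "a' < -1" using p2 by (auto simp: zero_less_mult_iff)
        hence "(-a) * (-a') > 1 * 1" using \<open>a < -1\<close> by (intro mult_strict_mono) auto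
        thus False using p assms(2) by simp
      qed
    qed
    thus ?thesis using True z by (simp add: cmod_def)
  next
    case False
    hence "a = T/2" using e2 by (simp add: field_simps)
    hence ta: "T*a = 2*(a*a)" by simp
    have "a^2 + b^2 = D" using e1 ta unfolding power2_eq_square by linarith
    hence "cmod z = sqrt D" using z by (simp add: cmod_def)
    thus ?thesis using assms(2) by simp
  qed
qed

lemma eig_char:
  fixes J :: "real^2^2"
  assumes "cplx_eigenvalue J z"
  shows "z^2 - complex_of_real (J$1$1 + J$2$2) * z + complex_of_real (J$1$1 * J$2$2 - J$1$2 * J$2$1) = 0"
proof -
  obtain v :: "complex^2" where v0: "v \<noteq> 0" and ev: "(\<chi> i. \<Sum>j\<in>UNIV. complex_of_real (J$i$j) * v$j) = z *s v"
    using assms unfolding cplx_eigenvalue_def by blast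
  let ?a = "complex_of_real (J$1$1)" and ?b = "complex_of_real (J$1$2)"
  let ?c = "complex_of_real (J$2$1)" and ?d = "complex_of_real (J$2$2)"
  have e1: "?a * v$1 + ?b * v$2 = z * v$1"
    using arg_cong[OF ev, of "\<lambda>w. w$1"] by (simp add: sum_2)
  have e2: "?c * v$1 + ?d * v$2 = z * v$2"
    using arg_cong[OF ev, of "\<lambda>w. w$2"] by (simp add: sum_2)
  define P where "P = (?a - z) * (?d - z) - ?b * ?c"
  have "P * v$1 = (?d - z) * (?a * v$1 + ?b * v$2 - z * v$1) - ?b * (?c * v$1 + ?d * v$2 - z * v$2)"
    unfolding P_def by (simp add: algebra_simps)
  hence p1: "P * v$1 = 0" using e1 e2 by simp
  have "P * v$2 = (?a - z) * (?c * v$1 + ?d * v$2 - z * v$2) - ?c * (?a * v$1 + ?b * v$2 - z * v$1)"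
    unfolding P_def by (simp add: algebra_simps)
  hence p2: "P * v$2 = 0" using e1 e2 by simp
  have "P = 0"
  proof (rule ccontr)
    assume "P \<noteq> 0"
    hence "v$1 = 0" "v$2 = 0" using p1 p2 by auto
    hence "v = 0" by (simp add: vec_eq_iff forall_2)
    thus False using v0 by simp
  qed
  thus ?thesis unfolding P_def by (simp add: algebra_simps power2_eq_square)
qed

lemma basis_axis_ex: "(i::real^'n) \<in> Basis \<Longrightarrow> \<exists>j. i = axis j 1"
  unfolding Basis_vec_def by auto

lemma vec2_has_derivative:
  fixes f :: "real^2 \<Rightarrow> real^2" and J :: "real^2^2"
  assumes c1: "((\<lambda>p. f p $ 1) has_derivative (\<lambda>v. (J *v v) $ 1)) (at q)"
   and c2: "((\<lambda>p. f p $ 2) has_derivative (\<lambda>v. (J *v v) $ 2)) (at q)"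
 shows "(f has_derivative (\<lambda>v. J *v v)) (at q)"
proof (rule has_derivative_componentwise_within[THEN iffD2], rule ballI)
    fix i :: "real^2" assume "i \<in> Basis"
    then obtain j where i: "i = axis j 1" using basis_axis_ex by blast
    have "j = 1 \<or> j = 2" by (rule exhaust_2)
    thus "((\<lambda>w. f w \<bullet> i) has_derivative (\<lambda>w. (J *v w) \<bullet> i)) (at q)"
    proof (elim disjE)
      assume "j = 1" thus ?thesis using c1 unfolding i inner_axis by simp
    next
      assume "j = 2" thus ?thesis using c2 unfolding i inner_axis by simp
    qed
  qed

definition Jm :: "real \<Rightarrow> real \<Rightarrow> real \<Rightarrow> real \<Rightarrow> real \<Rightarrow> real \<Rightarrow> real \<Rightarrow> real \<Rightarrow> real \<Rightarrow> real \<Rightarrow> real \<Rightarrow> real^2^2" where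
  "Jm r K \<alpha> h d \<theta> c m s x y = (let S = Sfac m s; A = \<alpha> * (1 - c); q = 1 + A * h * x in
     vector [vector [1 + S * (r * (1 - x / K) - A * y / q) + S * x * (- r / K + A * y * (A * h) / q^2),
                     - S * x * A / q],
             vector [S * y * (\<theta> * A / q - \<theta> * A * x * (A * h) / q^2), 1 + S * (\<theta> * A * x / q - d)]])"

lemma DFP_deriv:
  assumes q: "1 + \<alpha> * (1 - c) * h * x \<noteq> 0" and K: "K \<noteq> 0"
  shows "(DFP r K \<alpha> h d \<theta> c m s has_derivative (\<lambda>v. Jm r K \<alpha> h d \<theta> c m s x y *v v))
           (at (vector [x, y]))"
proof -
  let ?p = "vector [x, y] :: real^2"
  let ?S = "Sfac m s"
  define Q where "Q = 1 + \<alpha> * (1 - c) * h * x"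
  have Q: "Q \<noteq> 0" using q unfolding Q_def .
  have c1: "((\<lambda>p. DFP r K \<alpha> h d \<theta> c m s p $ 1) has_derivative (\<lambda>v. (Jm r K \<alpha> h d \<theta> c m s x y *v v) $ 1)) (at ?p)"
  proof -
    have "((\<lambda>p::real^2. p$1 + ?S * p$1 * (r * (1 - p$1 / K) - \<alpha> * (1 - c) * p$2 / (1 + \<alpha> * (1 - c) * h * p$1)))
       has_derivative (\<lambda>v. (Jm r K \<alpha> h d \<theta> c m s x y *v v) $ 1)) (at ?p)"
      apply (rule has_derivative_eq_rhs)
       apply (rule derivative_eq_intros vnth_deriv | use q K in simp)+
      apply (rule ext)
      apply (simp only: vector_2 Jm_def Let_def)
      apply (simp only: Q_def[symmetric])
      apply (simp add: matrix_vector_mult_def sum_2)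
      apply (simp add: divide_inverse power2_eq_square algebra_simps)
      done
    thus ?thesis by (simp add: DFP_def Let_def)
  qed
  have c2: "((\<lambda>p. DFP r K \<alpha> h d \<theta> c m s p $ 2) has_derivative (\<lambda>v. (Jm r K \<alpha> h d \<theta> c m s x y *v v) $ 2)) (at ?p)"
  proof -
    have "((\<lambda>p::real^2. p$2 + ?S * p$2 * (\<theta> * \<alpha> * (1 - c) * p$1 / (1 + \<alpha> * (1 - c) * h * p$1) - d))
       has_derivative (\<lambda>v. (Jm r K \<alpha> h d \<theta> c m s x y *v v) $ 2)) (at ?p)"
      apply (rule has_derivative_eq_rhs)
       apply (rule derivative_eq_intros vnth_deriv | use q K in simp)+
      apply (rule ext)
      apply (simp only: vector_2 Jm_def Let_def)
      apply (simp only: Q_def[symmetric])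
      apply (simp add: matrix_vector_mult_def sum_2)
      apply (simp add: divide_inverse power2_eq_square algebra_simps)
      done
    thus ?thesis by (simp add: DFP_def Let_def)
  qed
  show ?thesis by (rule vec2_has_derivative[OF c1 c2])
qed


lemma Jm_entries:
  "Jm r K \<alpha> h d \<theta> c m s x y $ 1 $ 1 = 1 + Sfac m s * (r * (1 - x / K) - \<alpha> * (1 - c) * y / (1 + \<alpha> * (1 - c) * h * x))
      + Sfac m s * x * (- r / K + \<alpha> * (1 - c) * y * (\<alpha> * (1 - c) * h) / (1 + \<alpha> * (1 - c) * h * x)^2)"
  "Jm r K \<alpha> h d \<theta> c m s x y $ 1 $ 2 = - Sfac m s * x * (\<alpha> * (1 - c)) / (1 + \<alpha> * (1 - c) * h * x)"
  "Jm r K \<alpha> h d \<theta> c m s x y $ 2 $ 1 = Sfac m s * y * (\<theta> * (\<alpha> * (1 - c)) / (1 + \<alpha> * (1 - c) * h * x)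
      - \<theta> * (\<alpha> * (1 - c)) * x * (\<alpha> * (1 - c) * h) / (1 + \<alpha> * (1 - c) * h * x)^2)"
  "Jm r K \<alpha> h d \<theta> c m s x y $ 2 $ 2 = 1 + Sfac m s * (\<theta> * (\<alpha> * (1 - c)) * x / (1 + \<alpha> * (1 - c) * h * x) - d)"
  by (simp_all add: Jm_def Let_def)

theorem theorem3p1:
  fixes r K \<alpha> h d \<theta> c m s :: real
  assumes "r > 0" and "K > 0" and "\<alpha> > 0" and "h > 0" and "d > 0"
    and "0 < \<theta>" and "\<theta> < 1" and "0 < c" and "c < 1"
    and "0 < m" and "m \<le> 1" and "s > 0"
    and "\<alpha> > 1 / (K * h)"
    and "\<theta> > h * d * (\<alpha> * K * h + 1) / (\<alpha> * K * h - 1)"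
    and "1 - (\<theta> + h * d) / (\<alpha> * K * h * (\<theta> - h * d)) < c"
    and "c < 1 - d / (\<alpha> * K * (\<theta> - h * d))"
    and "s < min ((m * Gamma m * Gval r K \<alpha> h d \<theta> c / Hval r K \<alpha> h d \<theta> c) powr (1 / m))
                 ((2 * m * Gamma m / Gval r K \<alpha> h d \<theta> c) powr (1 / m))"
  shows "Gval r K \<alpha> h d \<theta> c > 0 \<and> Hval r K \<alpha> h d \<theta> c > 0 \<and>
    (\<exists>J :: real^2^2.
       (DFP r K \<alpha> h d \<theta> c m s has_derivative (\<lambda>v. J *v v))
          (at (vector [xstar \<alpha> h d \<theta> c, ystar r K \<alpha> h d \<theta> c])) \<and>
       (\<forall>z. cplx_eigenvalue J z \<longrightarrow> cmod z < 1))"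
proof -
  note as = assms
  define A where "A = \<alpha> * (1 - c)"
  define \<beta> where "\<beta> = \<theta> - h * d"
  define x where "x = xstar \<alpha> h d \<theta> c"
  define y where "y = ystar r K \<alpha> h d \<theta> c"
  define S where "S = Sfac m s"
  define G where "G = Gval r K \<alpha> h d \<theta> c"
  define H where "H = Hval r K \<alpha> h d \<theta> c"
  define Q where "Q = 1 + \<alpha> * (1 - c) * h * x"
  have A0: "A > 0" unfolding A_def using as by simp
  have aKh: "\<alpha> * K * h > 1" using as(13) as(2) as(4)
    by (simp add: field_simps)
  have "h * d * (\<alpha> * K * h + 1) / (\<alpha> * K * h - 1) > h * d"
    using aKh as(4,5) by (simp add: field_simps)
  hence b0: "\<beta> > 0" unfolding \<beta>_def using as(14) by linarith
  have xdef: "x = d / (A * \<beta>)" unfolding x_def xstar_def A_def \<beta>_def by simp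
  have x0: "x > 0" using xdef A0 b0 as(5) by simp
  have Ax: "A * x * \<beta> = d" using xdef A0 b0 by (simp add: field_simps)
  have QA: "Q = 1 + A * h * x" unfolding Q_def A_def by simp
  have Qb: "Q = \<theta> / \<beta>"
  proof -
    have "A * h * x = h * d / \<beta>" using Ax b0 by (simp add: field_simps)
    thus ?thesis using QA b0 unfolding \<beta>_def by (simp add: field_simps)
  qed
  have Q0: "Q > 0" using Qb b0 as(6) by simp
  have ydef: "y = r * (K - x) * Q / (A * K)"
    unfolding y_def ystar_def Let_def x_def[symmetric] QA A_def by (simp add: algebra_simps)
  have Ay: "A * y / Q = r * (1 - x / K)"
    using ydef A0 Q0 as(2) by (simp add: field_simps)
  have Gx: "G = r * x / (K * \<theta>) * (\<theta> + h * d - A * h * K * \<beta>)"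
    unfolding G_def Gval_def x_def[symmetric] A_def \<beta>_def by (simp add: algebra_simps)
  have Hx: "H = r * x * \<beta> / (K * \<theta>) * (A * K * \<beta> - d)"
    unfolding H_def Hval_def x_def[symmetric] A_def \<beta>_def by (simp add: algebra_simps)
  have g1: "A * h * K * \<beta> < \<theta> + h * d"
  proof -
    have "(\<theta> + h * d) / (\<alpha> * K * h * \<beta>) > 1 - c" using as(15) unfolding \<beta>_def by linarith
    hence "(1 - c) * (\<alpha> * K * h * \<beta>) < \<theta> + h * d"
      using as b0 by (simp add: field_simps)
    thus ?thesis unfolding A_def by (simp add: algebra_simps)
  qed
  have h1: "A * K * \<beta> > d"
  proof -
    have "d / (\<alpha> * K * \<beta>) < 1 - c" using as(16) unfolding \<beta>_def by linarith
    hence "d < (1 - c) * (\<alpha> * K * \<beta>)"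
      using as b0 by (simp add: field_simps)
    thus ?thesis unfolding A_def by (simp add: algebra_simps)
  qed
  have G0: "G > 0" unfolding Gx using g1 as x0 by (intro mult_pos_pos) auto
  have H0: "H > 0" unfolding Hx using h1 as x0 b0 by (intro mult_pos_pos) auto
  define J where "J = Jm r K \<alpha> h d \<theta> c m s x y"
  have J22: "J$2$2 = 1"
  proof -
    have "\<theta> * A * x / Q = \<theta> * A * x * \<beta> / \<theta>" using Qb b0 by simp
    also have "\<dots> = A * x * \<beta>" using as(6) by simp
    finally have "\<theta> * A * x / Q = d" using Ax by simp
    thus ?thesis unfolding J_def Jm_entries A_def[symmetric] QA[symmetric] by simp
  qed
  have J11: "J$1$1 = 1 - S * G"
  proof -
    have e: "J$1$1 = 1 + S * x * (- r / K + A * h * (A * y / Q) / Q)"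
      unfolding J_def Jm_entries A_def[symmetric] QA[symmetric] S_def[symmetric]
      using Ay Q0 by (simp add: power2_eq_square algebra_simps)
    have g: "x * (- r / K + A * h * (r * (1 - x / K)) / Q) = - G"
      unfolding Gx Qb using as b0 x0 Ax by (simp add: field_simps)
    have "J$1$1 = 1 + S * (x * (- r / K + A * h * (r * (1 - x / K)) / Q))"
      using e unfolding Ay by (simp add: mult.assoc)
    thus ?thesis unfolding g by simp
  qed
  have J1221: "J$1$2 * J$2$1 = - (S^2 * H)"
  proof -
    have e: "J$1$2 * J$2$1 = - (S^2 * (x * (A * y / Q) * \<theta> * A * (Q - A * h * x) / Q^2))"
      unfolding J_def Jm_entries A_def[symmetric] QA[symmetric] S_def[symmetric]
      using Q0 by (simp add: power2_eq_square field_simps)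
    have q1: "Q - A * h * x = 1" using QA by simp
    have "x * (r * (1 - x / K)) * \<theta> * A * (Q - A * h * x) / Q^2 = x * (r * (1 - x / K)) * \<theta> * A / Q^2"
      unfolding q1 by simp
    also have "\<dots> = r * x * \<beta> / (K * \<theta>) * (A * (K - x) * \<beta>)"
      unfolding Qb using as(2,6) b0 by (simp add: field_simps power2_eq_square)
    also have "A * (K - x) * \<beta> = A * K * \<beta> - d" using Ax by (simp add: algebra_simps)
    finally have "x * (r * (1 - x / K)) * \<theta> * A * (Q - A * h * x) / Q^2 = H" unfolding Hx .
    thus ?thesis unfolding e Ay by simp
  qed
  have Gam: "Gamma m > 0" using as(10) by (simp add: Gamma_real_pos)
  have mG: "m * Gamma m > 0" using Gam as(10) by simp
  have S0: "S > 0" unfolding S_def Sfac_def using as(12) mG by simp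
  have spow: "\<And>B. B > 0 \<Longrightarrow> s < B powr (1 / m) \<Longrightarrow> s powr m < B"
  proof -
    fix B :: real assume B: "B > 0" "s < B powr (1 / m)"
    have "s powr m < (B powr (1 / m)) powr m"
      using B as(10,12) by (intro powr_less_mono2) auto
    also have "\<dots> = B" using B as(10) by (simp add: powr_powr)
    finally show "s powr m < B" .
  qed
  have SH: "S * H < G"
  proof -
    have "s powr m < m * Gamma m * G / H"
      using spow[of "m * Gamma m * G / H"] as(17) mG G0 H0 unfolding G_def H_def by simp
    hence "s powr m / (m * Gamma m) < G / H" using mG H0 by (simp add: field_simps)
    thus ?thesis using H0 unfolding S_def Sfac_def by (simp add: field_simps)
  qed
  have SG: "S * G < 2"
  proof -
    have "s powr m < 2 * m * Gamma m / G"
      using spow[of "2 * m * Gamma m / G"] as(17) mG G0 unfolding G_def by simp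
    hence "s powr m / (m * Gamma m) < 2 / G" using mG G0 by (simp add: field_simps)
    thus ?thesis using G0 unfolding S_def Sfac_def by (simp add: field_simps)
  qed
  have deriv: "(DFP r K \<alpha> h d \<theta> c m s has_derivative (\<lambda>v. J *v v)) (at (vector [x, y]))"
    unfolding J_def by (rule DFP_deriv) (use Q0 as(2) in \<open>auto simp: Q_def\<close>)
  have eig: "cmod z < 1" if "cplx_eigenvalue J z" for z
  proof -
    define T where "T = 2 - S * G"
    define D where "D = 1 - S * G + S^2 * H"
    have TJ: "J$1$1 + J$2$2 = T" unfolding T_def J11 J22 by simp
    have DJ: "J$1$1 * J$2$2 - J$1$2 * J$2$1 = D" unfolding D_def J11 J22 J1221 by simp
    have q: "z^2 - complex_of_real T * z + complex_of_real D = 0"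
      using eig_char[OF that] unfolding TJ DJ .
    show ?thesis
    proof (rule quad_root_lt1[of z T D])
      show "z^2 - complex_of_real T * z + complex_of_real D = 0" by (rule q)
      have "S * (S * H) < S * G" using SH S0 by simp
      thus "D < 1" unfolding D_def by (simp add: power2_eq_square)
      show "1 - T + D > 0" unfolding T_def D_def using S0 H0 by simp
      have "S^2 * H > 0" using S0 H0 by simp
      thus "1 + T + D > 0" unfolding T_def D_def using SG by (simp add: mult.commute)
    qed
  qed
  show ?thesis using G0 H0 deriv eig unfolding G_def H_def x_def y_def by blast
qed

end
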